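(* Let $G$ be a graph with $N$ edges having a 3-valent vertex whose incident edges are numbered $1,2,3$. Then the open subscheme $$\mathcal{V}(\Psi^{13,23}_G)\setminus\big(\mathcal{V}(\Psi^{13,23}_G)\cap\mathcal{V}(\Psi^{1,2}_{G,3})\big)\subset\mathbb{P}^{N-4}=\mathbb{P}(\alpha_4:\dots:\alpha_N)$$ is smooth.
   Context: Dodgson polynomials: for a graph $G$ without self-loops, with edges $1,\dots,N$ and variables $\alpha_e$, orient the edges; for edge $e$ and vertex $v$ let $\varepsilon_{e,v}=1$ if $v$ is the source of $e$, $-1$ if the target, $0$ otherwise; let $\mathcal{E}_G$ be obtained from $(\varepsilon_{e,v})$ by deleting one column, $A=\mathrm{diag}(\alpha_1,\dots,\alpha_N)$, $M_G=\begin{pmatrix}A&\mathcal{E}_G\\-\mathcal{E}_G^T&0\end{pmatrix}$ (so $\Psi_G=\det M_G$ is the graph polynomial). For edge sets $I,J,K$ with $|I|=|J|$, $\Psi^{I,J}_{G,K}$ is the determinant of $M_G$ with rows $I$ and columns $J$ removed and $\alpha_e=0$ for $e\in K$ (defined up to sign). Sets are written by concatenating labels: $\Psi^{13,23}_G$ has $I=\{1,3\}$, $J=\{2,3\}$; $\Psi^{1,2}_{G,3}$ has $I=\{1\},J=\{2\},K=\{3\}$. $\mathcal{V}(\cdot)$ denotes the zero locus. *)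

theory Defs
  imports "HOL-Library.Poly_Mapping" "Jordan_Normal_Form.Determinant" "Jordan_Normal_Form.DL_Submatrix"
begin

text \<open>Multivariate polynomials in the variables alpha_0, alpha_1, ... with coefficients in 'k,
  represented as finitely supported maps from monomials (exponent vectors) to coefficients.\<close>
type_synonym 'k mpoly = "(nat \<Rightarrow>\<^sub>0 nat) \<Rightarrow>\<^sub>0 'k"

definition mp_var :: "nat \<Rightarrow> 'k::comm_ring_1 mpoly" where
  "mp_var i = Poly_Mapping.single (Poly_Mapping.single i 1) 1"

definition mp_const :: "'k::comm_ring_1 \<Rightarrow> 'k mpoly" where
  "mp_const c = Poly_Mapping.single 0 c"

definition mp_eval :: "(nat \<Rightarrow> 'k::comm_ring_1) \<Rightarrow> 'k mpoly \<Rightarrow> 'k" where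
  "mp_eval a p = (\<Sum>m\<in>Poly_Mapping.keys p.
      Poly_Mapping.lookup p m * (\<Prod>i\<in>Poly_Mapping.keys m. a i ^ Poly_Mapping.lookup m i))"

definition mp_pderiv :: "nat \<Rightarrow> 'k::comm_ring_1 mpoly \<Rightarrow> 'k mpoly" where
  "mp_pderiv i p = (\<Sum>m\<in>Poly_Mapping.keys p.
      Poly_Mapping.single (m - Poly_Mapping.single i 1)
        (of_nat (Poly_Mapping.lookup m i) * Poly_Mapping.lookup p m))"

text \<open>Graphs: edges are labelled 1..N, vertices are 0..<n; edge e is oriented from
  src e to tgt e.  A loopless graph has src e \<noteq> tgt e.\<close>
definition loopless_graph :: "nat \<Rightarrow> nat \<Rightarrow> (nat \<Rightarrow> nat) \<Rightarrow> (nat \<Rightarrow> nat) \<Rightarrow> bool" where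
  "loopless_graph n N src tgt \<longleftrightarrow>
     (\<forall>e\<in>{1..N}. src e < n \<and> tgt e < n \<and> src e \<noteq> tgt e)"

definition eps :: "(nat \<Rightarrow> nat) \<Rightarrow> (nat \<Rightarrow> nat) \<Rightarrow> nat \<Rightarrow> nat \<Rightarrow> int" where
  "eps src tgt e v = (if v = src e then 1 else if v = tgt e then -1 else 0)"

text \<open>The vertex columns: vertex d is deleted; vertex column k corresponds to vertex
  (if k < d then k else k+1).\<close>
definition vcol :: "nat \<Rightarrow> nat \<Rightarrow> nat" where
  "vcol d k = (if k < d then k else Suc k)"

text \<open>The matrix M_G (size N + n - 1) with alpha_e := 0 for e \<in> K.  Row/column index i < N
  corresponds to edge i+1, index N + k to vertex vcol d k.\<close>
definition graph_matrix ::
  "nat \<Rightarrow> nat \<Rightarrow> (nat \<Rightarrow> nat) \<Rightarrow> (nat \<Rightarrow> nat) \<Rightarrow> nat \<Rightarrow> nat set \<Rightarrow> 'k::comm_ring_1 mpoly mat" where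
  "graph_matrix n N src tgt d K = mat (N + n - 1) (N + n - 1) (\<lambda>(i,j).
     if i < N \<and> j < N then (if i = j \<and> Suc i \<notin> K then mp_var (Suc i) else 0)
     else if i < N then mp_const (of_int (eps src tgt (Suc i) (vcol d (j - N))))
     else if j < N then mp_const (of_int (- eps src tgt (Suc j) (vcol d (i - N))))
     else 0)"

text \<open>Dodgson polynomial Psi^{I,J}_{G,K}: determinant of M_G with the rows of the edges in I
  and the columns of the edges in J removed and alpha_e = 0 for e \<in> K (defined up to sign).\<close>
definition dodgson ::
  "nat \<Rightarrow> nat \<Rightarrow> (nat \<Rightarrow> nat) \<Rightarrow> (nat \<Rightarrow> nat) \<Rightarrow> nat \<Rightarrow> nat set \<Rightarrow> nat set \<Rightarrow> nat set \<Rightarrow> 'k::comm_ring_1 mpoly" where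
  "dodgson n N src tgt d I J K =
     det (submatrix (graph_matrix n N src tgt d K)
            {i. i < N + n - 1 \<and> Suc i \<notin> I \<or> N \<le> i}
            {j. j < N + n - 1 \<and> Suc j \<notin> J \<or> N \<le> j})"

text \<open>Smoothness of the open subscheme V(f) \ (V(f) \<inter> V(g)) of the projective space with
  homogeneous coordinates alpha_e, e \<in> C, via the Jacobian criterion at points over the
  field 'k: if f is the zero polynomial, V(f) is the whole projective space (smooth);
  otherwise every point of V(f) outside V(g) must have a non-vanishing partial derivative.\<close>
definition open_hypersurface_smooth :: "nat set \<Rightarrow> 'k::field mpoly \<Rightarrow> 'k mpoly \<Rightarrow> bool" where
  "open_hypersurface_smooth C f g \<longleftrightarrow>
     f = 0 \<or>
     (\<forall>a :: nat \<Rightarrow> 'k. (\<exists>e\<in>C. a e \<noteq> 0) \<longrightarrow> mp_eval a f = 0 \<longrightarrow> mp_eval a g \<noteq> 0 \<longrightarrow>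
        (\<exists>e\<in>C. mp_eval a (mp_pderiv e f) \<noteq> 0))"

end

theory Submission
  imports Defs
begin

definition mon :: "(nat \<Rightarrow> 'k::comm_ring_1) \<Rightarrow> (nat \<Rightarrow>\<^sub>0 nat) \<Rightarrow> 'k" where
  "mon a m = (\<Prod>i\<in>Poly_Mapping.keys m. a i ^ Poly_Mapping.lookup m i)"

lemma mon_superset: "finite S \<Longrightarrow> Poly_Mapping.keys m \<subseteq> S \<Longrightarrow>
  mon a m = (\<Prod>i\<in>S. a i ^ Poly_Mapping.lookup m i)"
  unfolding mon_def by (rule prod.mono_neutral_left) (auto simp: in_keys_iff)

lemma mon_add: "mon a (m + m') = mon a m * mon a m'"
proof -
  let ?S = "Poly_Mapping.keys m \<union> Poly_Mapping.keys m'"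
  have "mon a (m+m') = (\<Prod>i\<in>?S. a i ^ Poly_Mapping.lookup (m+m') i)"
    by (rule mon_superset) (auto simp: keys_add)
  also have "\<dots> = (\<Prod>i\<in>?S. a i ^ Poly_Mapping.lookup m i) * (\<Prod>i\<in>?S. a i ^ Poly_Mapping.lookup m' i)"
    by (simp add: lookup_add power_add prod.distrib)
  also have "\<dots> = mon a m * mon a m'"
    by (subst (1 2) mon_superset[of ?S]) auto
  finally show ?thesis .
qed

lemma mon_zero[simp]: "mon a 0 = 1" by (simp add: mon_def)

lemma mp_eval_mon: "mp_eval a p = (\<Sum>m\<in>Poly_Mapping.keys p. Poly_Mapping.lookup p m * mon a m)"
  unfolding mp_eval_def mon_def ..

lemma mp_eval_add: "mp_eval a (p + q) = mp_eval a p + mp_eval a q"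
  unfolding mp_eval_mon
  by (rule setsum_keys_plus_distrib) (auto simp: distrib_right)

lemma mp_eval_zero[simp]: "mp_eval a 0 = 0" by (simp add: mp_eval_def)

lemma mp_eval_single: "mp_eval a (Poly_Mapping.single m c) = c * mon a m"
  unfolding mp_eval_mon by auto

lemma mp_eval_sum: "mp_eval a (sum f S) = (\<Sum>x\<in>S. mp_eval a (f x))"
  by (induction S rule: infinite_finite_induct) (auto simp: mp_eval_add)

lemma poly_expand: "p = (\<Sum>m\<in>Poly_Mapping.keys p. Poly_Mapping.single m (Poly_Mapping.lookup p m))"
proof (rule poly_mapping_eqI)
  fix k
  have "Poly_Mapping.lookup (\<Sum>m\<in>Poly_Mapping.keys p. Poly_Mapping.single m (Poly_Mapping.lookup p m)) k
     = (\<Sum>m\<in>Poly_Mapping.keys p. (Poly_Mapping.lookup p m when m = k))"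
    by (simp add: lookup_sum lookup_single)
  also have "\<dots> = Poly_Mapping.lookup p k"
    by (cases "k \<in> Poly_Mapping.keys p") (auto simp: when_def in_keys_iff)
  finally show "Poly_Mapping.lookup p k = Poly_Mapping.lookup (\<Sum>m\<in>Poly_Mapping.keys p. Poly_Mapping.single m (Poly_Mapping.lookup p m)) k" by simp
qed

lemma mp_eval_mult: "mp_eval a (p * q) = mp_eval a p * mp_eval a (q :: 'k::comm_ring_1 mpoly)"
proof -
  let ?P = "Poly_Mapping.keys p" and ?Q = "Poly_Mapping.keys q"
  have "p * q = (\<Sum>m\<in>?P. Poly_Mapping.single m (Poly_Mapping.lookup p m)) * (\<Sum>m'\<in>?Q. Poly_Mapping.single m' (Poly_Mapping.lookup q m'))"
    by (subst (1) poly_expand, subst (1) poly_expand[of q]) simp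
  also have "\<dots> = (\<Sum>m\<in>?P. \<Sum>m'\<in>?Q. Poly_Mapping.single (m + m') (Poly_Mapping.lookup p m * Poly_Mapping.lookup q m'))"
    by (simp add: sum_product mult_single)
  finally have "mp_eval a (p*q) = (\<Sum>m\<in>?P. \<Sum>m'\<in>?Q. (Poly_Mapping.lookup p m * mon a m) * (Poly_Mapping.lookup q m' * mon a m'))"
    by (simp add: mp_eval_sum mp_eval_single mon_add ac_simps)
  also have "\<dots> = mp_eval a p * mp_eval a q"
    by (simp add: mp_eval_mon sum_product)
  finally show ?thesis .
qed

lemma mp_eval_one: "mp_eval a 1 = 1"
  by (simp add: mp_eval_mon lookup_one)

interpretation mp_eval_hom: comm_ring_hom "mp_eval a"
  by unfold_locales (auto simp: mp_eval_add mp_eval_mult mp_eval_one)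

lemma mp_eval_var[simp]: "mp_eval a (mp_var i) = a i"
  by (simp add: mp_var_def mp_eval_single mon_def)

lemma mp_eval_const[simp]: "mp_eval a (mp_const c) = c"
  by (simp add: mp_const_def mp_eval_single)

lemma mp_const_add: "mp_const (x + y) = mp_const x + mp_const y"
  by (simp add: mp_const_def single_add)
lemma mp_const_mult: "mp_const (x * y) = mp_const x * mp_const y"
  by (simp add: mp_const_def mult_single)
lemma mp_const_0[simp]: "mp_const 0 = 0" by (simp add: mp_const_def)
lemma mp_const_1[simp]: "mp_const 1 = 1" by (simp add: mp_const_def)

interpretation mp_const_hom: comm_ring_hom "mp_const"
  by unfold_locales (auto simp: mp_const_add mp_const_mult)

definition efree :: "nat \<Rightarrow> 'k::comm_ring_1 mpoly \<Rightarrow> bool" where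
  "efree e p \<longleftrightarrow> (\<forall>m\<in>Poly_Mapping.keys p. Poly_Mapping.lookup m e = 0)"

lemma efree_add: assumes "efree e p" "efree e q" shows "efree e (p + q)"
  unfolding efree_def
proof
  fix m assume "m \<in> Poly_Mapping.keys (p + q)"
  hence "m \<in> Poly_Mapping.keys p \<union> Poly_Mapping.keys q" using keys_add[of p q] by (rule subsetD[rotated])
  thus "Poly_Mapping.lookup m e = 0" using assms unfolding efree_def by blast
qed

lemma efree_uminus: "efree e p \<Longrightarrow> efree e (- p)"
  unfolding efree_def by (simp add: keys_def)

lemma efree_mult: "efree e p \<Longrightarrow> efree e q \<Longrightarrow> efree e (p * q)"
  unfolding efree_def using keys_mult by (fastforce simp: lookup_add)

lemma efree_0: "efree e 0" by (simp add: efree_def)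
lemma efree_1: "efree e 1" by (simp add: efree_def keys_def lookup_one when_def)
lemma efree_const: "efree e (mp_const c)" by (simp add: efree_def mp_const_def)
lemma efree_var: "j \<noteq> e \<Longrightarrow> efree e (mp_var j)" by (simp add: efree_def mp_var_def lookup_single)

lemma efree_sum: "(\<And>x. x\<in>S \<Longrightarrow> efree e (f x)) \<Longrightarrow> efree e (sum f S)"
  by (induction S rule: infinite_finite_induct) (auto simp: efree_0 efree_add)
lemma efree_prod: "(\<And>x. x\<in>S \<Longrightarrow> efree e (f x)) \<Longrightarrow> efree e (prod f S)"
  by (induction S rule: infinite_finite_induct) (auto simp: efree_1 efree_mult)

lemma efree_signof: "efree e (signof p)"
  by (simp add: sign_def efree_1 efree_uminus)

lemma efree_det: assumes "\<And>i j. i < dim_row A \<Longrightarrow> j < dim_col A \<Longrightarrow> efree e (A $$ (i,j))"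
  shows "efree e (det A)"
  unfolding det_def using assms
  by (auto intro!: efree_sum efree_mult efree_signof efree_prod efree_0 simp: permutes_def)

lemma pderiv_superset: "finite S \<Longrightarrow> Poly_Mapping.keys p \<subseteq> S \<Longrightarrow>
  mp_pderiv i p = (\<Sum>m\<in>S. Poly_Mapping.single (m - Poly_Mapping.single i 1)
        (of_nat (Poly_Mapping.lookup m i) * Poly_Mapping.lookup p m))"
  unfolding mp_pderiv_def by (rule sum.mono_neutral_left) (auto simp: in_keys_iff)

lemma pderiv_add: "mp_pderiv i (p + q) = mp_pderiv i p + mp_pderiv i q"
  unfolding mp_pderiv_def
  by (rule setsum_keys_plus_distrib) (auto simp: distrib_left single_add)

lemma pderiv_zero[simp]: "mp_pderiv i 0 = 0" by (simp add: mp_pderiv_def)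

lemma pderiv_sum: "mp_pderiv i (sum f S) = (\<Sum>x\<in>S. mp_pderiv i (f x))"
  by (induction S rule: infinite_finite_induct) (simp_all add: pderiv_add)

lemma pderiv_efree: "efree e p \<Longrightarrow> mp_pderiv e p = 0"
  unfolding mp_pderiv_def efree_def by (auto intro!: sum.neutral)

lemma pderiv_uminus: "mp_pderiv i (- p) = - mp_pderiv i p"
proof -
  have "mp_pderiv i p + mp_pderiv i (-p) = 0" using pderiv_add[of i p "-p"] by simp
  thus ?thesis by (metis add.commute eq_neg_iff_add_eq_0)
qed

lemma pderiv_single: "mp_pderiv i (Poly_Mapping.single k c) =
   Poly_Mapping.single (k - Poly_Mapping.single i 1) (of_nat (Poly_Mapping.lookup k i) * c)"
  unfolding mp_pderiv_def by auto

lemma pderiv_var_mult: assumes "efree e X"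
  shows "mp_pderiv e (mp_var e * X) = X"
proof -
  let ?X = "Poly_Mapping.keys X"
  have "mp_var e * X = (\<Sum>m\<in>?X. Poly_Mapping.single (Poly_Mapping.single e 1 + m) (Poly_Mapping.lookup X m))"
    unfolding mp_var_def
    by (subst (1) poly_expand) (simp add: sum_distrib_left mult_single)
  hence "mp_pderiv e (mp_var e * X) = (\<Sum>m\<in>?X. Poly_Mapping.single m (Poly_Mapping.lookup X m))"
    using assms unfolding efree_def
    by (simp add: pderiv_sum pderiv_single lookup_add)
  also have "\<dots> = X" by (rule poly_expand[symmetric])
  finally show ?thesis .
qed

lemma pderiv_lin: "efree e X \<Longrightarrow> efree e Y \<Longrightarrow> mp_pderiv e (mp_var e * X + Y) = X"
  by (simp add: pderiv_add pderiv_var_mult pderiv_efree)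

definition rr :: "'a::comm_ring_1 mat \<Rightarrow> nat \<Rightarrow> nat \<Rightarrow> 'a mat" where
  "rr A r c = mat (dim_row A) (dim_col A) (\<lambda>(i,j). if i = r then (if j = c then 1 else 0) else A $$ (i,j))"

lemma rr_carrier: "A \<in> carrier_mat n n \<Longrightarrow> rr A r c \<in> carrier_mat n n"
  by (simp add: rr_def)

lemma rr_index: "i < dim_row A \<Longrightarrow> j < dim_col A \<Longrightarrow>
  rr A r c $$ (i,j) = (if i = r then (if j = c then 1 else 0) else A $$ (i,j))"
  by (simp add: rr_def)

lemma rr_dims[simp]: "dim_row (rr A r c) = dim_row A" "dim_col (rr A r c) = dim_col A"
  by (simp_all add: rr_def)

lemma mat_delete_rr: "mat_delete (rr A r c) r j = mat_delete A r j"
  by (rule eq_matI) (auto simp: mat_delete_def rr_def)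

lemma cofactor_rr: "cofactor (rr A r c) r j = cofactor A r j"
  by (simp add: cofactor_def mat_delete_rr)

lemma det_rr: assumes A: "A \<in> carrier_mat n n" and r: "r < n" and c: "c < n"
  shows "det (rr A r c) = cofactor A r c"
proof -
  have "det (rr A r c) = (\<Sum>j<n. rr A r c $$ (r,j) * cofactor (rr A r c) r j)"
    by (rule laplace_expansion_row[OF rr_carrier[OF A] r])
  also have "\<dots> = (\<Sum>j<n. if j = c then cofactor A r j else 0)"
    by (rule sum.cong) (use A r in \<open>auto simp: rr_index cofactor_rr\<close>)
  also have "\<dots> = cofactor A r c" using c by simp
  finally show ?thesis .
qed

lemma mat_delete_rr2: assumes "r < i" "c < j"
  shows "mat_delete (rr A r c) i j = rr (mat_delete A i j) r c"
  by (rule eq_matI) (use assms in \<open>auto simp: mat_delete_def rr_def\<close>)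

lemma pick_02: "pick {i. i \<noteq> 0 \<and> i \<noteq> (2::nat)} k = (if k = 0 then 1 else k + 2)"
proof (induction k)
  case 0 show ?case by (auto intro!: Least_equality)
next
  case (Suc k) show ?case using Suc by (auto intro!: Least_equality)
qed

lemma pick_12: "pick {i. i \<noteq> 1 \<and> i \<noteq> (2::nat)} k = (if k = 0 then 0 else k + 2)"
proof (induction k)
  case 0 show ?case by (auto intro!: Least_equality)
next
  case (Suc k) show ?case using Suc by (auto intro!: Least_equality)
qed

lemma pick_0: "pick {i. i \<noteq> (0::nat)} k = k + 1"
proof (induction k)
  case 0 show ?case by (auto intro!: Least_equality)
next
  case (Suc k) show ?case using Suc by (auto intro!: Least_equality)
qed

lemma pick_1: "pick {i. i \<noteq> (1::nat)} k = (if k = 0 then 0 else k + 1)"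
proof (induction k)
  case 0 show ?case by (auto intro!: Least_equality)
next
  case (Suc k) show ?case using Suc by (auto intro!: Least_equality)
qed

lemma card_minus2: assumes "a < D" "b < D" "a \<noteq> b"
  shows "card {i. i < D \<and> i \<noteq> a \<and> i \<noteq> (b::nat)} = D - 2"
proof -
  have "{i. i < D \<and> i \<noteq> a \<and> i \<noteq> b} = {..<D} - {a,b}" by auto
  moreover have "card ({..<D} - {a,b}) = D - 2"
    using assms by (subst card_Diff_subset) auto
  ultimately show ?thesis by simp
qed

lemma card_minus1: assumes "a < D"
  shows "card {i. i < D \<and> i \<noteq> (a::nat)} = D - 1"
proof -
  have "{i. i < D \<and> i \<noteq> a} = {..<D} - {a}" by auto
  moreover have "card ({..<D} - {a}) = D - 1"
    using assms by (subst card_Diff_subset) auto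
  ultimately show ?thesis by simp
qed

lemma submatrix_f: assumes A: "A \<in> carrier_mat D D" and D: "3 \<le> D"
  shows "submatrix A {i. i \<noteq> 0 \<and> i \<noteq> 2} {j. j \<noteq> 1 \<and> j \<noteq> 2} = mat_delete (mat_delete A 2 2) 0 1"
proof -
  define S where "S = {i::nat. i \<noteq> 0 \<and> i \<noteq> 2}"
  define T where "T = {i::nat. i \<noteq> 1 \<and> i \<noteq> 2}"
  have pS: "\<And>k. pick S k = (if k = 0 then 1 else k + 2)" unfolding S_def by (rule pick_02)
  have pT: "\<And>k. pick T k = (if k = 0 then 0 else k + 2)" unfolding T_def by (rule pick_12)
  have c1: "card {i. i < D \<and> i \<in> S} = D - 2"
    using card_minus2[of 0 D 2] D unfolding S_def by simp
  have c2: "card {i. i < D \<and> i \<in> T} = D - 2"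
    using card_minus2[of 1 D 2] D unfolding T_def by simp
  have "submatrix A S T = mat_delete (mat_delete A 2 2) 0 1"
    by (rule eq_matI) (use A c1 c2 in \<open>auto simp: submatrix_def mat_delete_def pS pT\<close>)
  thus ?thesis unfolding S_def T_def .
qed

lemma submatrix_g: assumes A: "A \<in> carrier_mat D D" and D: "2 \<le> D"
  shows "submatrix A {i. i \<noteq> 0} {j. j \<noteq> 1} = mat_delete A 0 1"
proof -
  define S where "S = {i::nat. i \<noteq> 0}"
  define T where "T = {i::nat. i \<noteq> 1}"
  have pS: "\<And>k. pick S k = k + 1" unfolding S_def by (rule pick_0)
  have pT: "\<And>k. pick T k = (if k = 0 then 0 else k + 1)" unfolding T_def by (rule pick_1)
  have c1: "card {i. i < D \<and> i \<in> S} = D - 1"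
    using card_minus1[of 0 D] D unfolding S_def by simp
  have c2: "card {i. i < D \<and> i \<in> T} = D - 1"
    using card_minus1[of 1 D] D unfolding T_def by simp
  have "submatrix A S T = mat_delete A 0 1"
    by (rule eq_matI) (use A c1 c2 in \<open>auto simp: submatrix_def mat_delete_def pS pT\<close>)
  thus ?thesis unfolding S_def T_def .
qed

lemma det_f_chain: assumes A: "A \<in> carrier_mat D D" and D: "3 \<le> D"
  shows "det (submatrix A {i. i \<noteq> 0 \<and> i \<noteq> 2} {j. j \<noteq> 1 \<and> j \<noteq> 2}) = - det (rr (rr A 0 1) 2 2)"
proof -
  have A1: "rr A 0 1 \<in> carrier_mat D D" using rr_carrier[OF A] .
  have "det (rr (rr A 0 1) 2 2) = cofactor (rr A 0 1) 2 2" using det_rr[OF A1] D by simp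
  also have "\<dots> = det (rr (mat_delete A 2 2) 0 1)"
    by (simp add: cofactor_def mat_delete_rr2)
  also have "\<dots> = cofactor (mat_delete A 2 2) 0 1"
    by (rule det_rr[of _ "D - 1"]) (use A D in auto)
  also have "\<dots> = - det (mat_delete (mat_delete A 2 2) 0 1)" by (simp add: cofactor_def)
  finally show ?thesis using submatrix_f[OF A D] by simp
qed

lemma det_g_chain: assumes A: "A \<in> carrier_mat D D" and D: "2 \<le> D"
  shows "det (submatrix A {i. i \<noteq> 0} {j. j \<noteq> 1}) = - det (rr A 0 1)"
  using det_rr[OF A, of 0 1] D submatrix_g[OF A D] by (simp add: cofactor_def)


lemma sum_split_at: "(\<Sum>j<N+m. f j) = (\<Sum>j<N. f j) + (\<Sum>k<(m::nat). f (N+k))"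
  by (induction m) (auto simp: add.assoc)

lemma sum_vcol: "d < n \<Longrightarrow> (\<Sum>k<n-1. f (vcol d k)) = (\<Sum>p\<in>{..<n}-{d}. f p)"
  by (rule sum.reindex_bij_witness[of _ "\<lambda>p. if p < d then p else p - 1" "vcol d"]) (auto simp: vcol_def)

lemma eps_sum_h: assumes "src e \<noteq> tgt e"
  shows "src e < n \<Longrightarrow> tgt e < n \<Longrightarrow>
    (\<Sum>p<n. of_int (eps src tgt e p) * h p) = h (src e) - (h (tgt e) :: 'a::comm_ring_1)"
proof -
  assume s: "src e < n" and t: "tgt e < n"
  have "\<And>p. of_int (eps src tgt e p) * h p = (if p = src e then h p else 0) - (if p = tgt e then h p else 0)"
    using assms by (auto simp: eps_def)
  hence "(\<Sum>p<n. of_int (eps src tgt e p) * h p) = (\<Sum>p<n. (if p = src e then h p else 0) - (if p = tgt e then h p else 0))"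
    by simp
  also have "\<dots> = h (src e) - h (tgt e)" using s t by (simp add: sum_subtractf)
  finally show ?thesis .
qed

lemma rr_mult_vec: assumes A: "A \<in> carrier_mat m m" and z: "z \<in> carrier_vec m" and i: "i < m" and c: "c < m"
  shows "(rr A r c *\<^sub>v z) $ i = (if i = r then z $ c else (A *\<^sub>v z) $ i)"
proof (cases "i = r")
  case True
  have "(rr A r c *\<^sub>v z) $ i = (\<Sum>j<m. (if j = c then 1 else 0) * z $ j)"
    using A z i True by (simp add: scalar_prod_def rr_def atLeast0LessThan)
  also have "\<dots> = (\<Sum>j<m. if j = c then z $ j else 0)" by (rule sum.cong) auto
  also have "\<dots> = z $ c" using c by simp
  finally show ?thesis using True by simp
next
  case False
  thus ?thesis using A z i by (simp add: scalar_prod_def rr_def atLeast0LessThan row_def)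
qed

lemma map_rr: "h 0 = 0 \<Longrightarrow> h 1 = 1 \<Longrightarrow> map_mat h (rr A r c) = rr (map_mat h A) r c"
  by (rule eq_matI) (auto simp: rr_def)

lemma efree_power: "efree e p \<Longrightarrow> efree e (p ^ m)"
  by (induction m) (auto simp: efree_1 efree_mult)

lemma det_zero_const_kernel: fixes X :: "'k::field mpoly mat"
  assumes X: "X \<in> carrier_mat D D" and y: "y \<in> carrier_vec D" and k: "k < D" "y $ k \<noteq> 0"
    and cst: "\<And>i j. i < D \<Longrightarrow> j < D \<Longrightarrow> y $ j \<noteq> 0 \<Longrightarrow> X $$ (i,j) = mp_const (mp_eval a (X $$ (i,j)))"
    and ker: "map_mat (mp_eval a) X *\<^sub>v y = 0\<^sub>v D"
  shows "det X = 0"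
proof -
  define y' where "y' = vec D (\<lambda>j. mp_const (y $ j / y $ k))"
  have y': "y' \<in> carrier_vec D" by (simp add: y'_def)
  have Xy: "X *\<^sub>v y' = 0\<^sub>v D"
  proof (rule eq_vecI)
    fix i assume i: "i < dim_vec (0\<^sub>v D :: 'k mpoly vec)"
    hence i: "i < D" by simp
    have "(X *\<^sub>v y') $ i = (\<Sum>j<D. X $$ (i,j) * mp_const (y $ j / y $ k))"
      using X i by (simp add: scalar_prod_def y'_def atLeast0LessThan)
    also have "\<dots> = (\<Sum>j<D. mp_const (mp_eval a (X $$ (i,j)) * y $ j / y $ k))"
    proof (rule sum.cong[OF refl])
      fix j assume j: "j \<in> {..<D}"
      show "X $$ (i,j) * mp_const (y $ j / y $ k) = mp_const (mp_eval a (X $$ (i,j)) * y $ j / y $ k)"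
      proof (cases "y $ j = 0")
        case True thus ?thesis by simp
      next
        case False
        hence "X $$ (i,j) = mp_const (mp_eval a (X $$ (i,j)))" using cst i j by auto
        hence "X $$ (i,j) * mp_const (y $ j / y $ k) = mp_const (mp_eval a (X $$ (i,j))) * mp_const (y $ j / y $ k)"
          by simp
        thus ?thesis by (simp add: mp_const_mult[symmetric] times_divide_eq_right)
      qed
    qed
    also have "\<dots> = mp_const ((\<Sum>j<D. mp_eval a (X $$ (i,j)) * y $ j) / y $ k)"
      by (simp add: mp_const_hom.hom_sum sum_divide_distrib)
    also have "(\<Sum>j<D. mp_eval a (X $$ (i,j)) * y $ j) = (map_mat (mp_eval a) X *\<^sub>v y) $ i"
      using X i y by (simp add: scalar_prod_def atLeast0LessThan)
    also have "\<dots> = 0" using ker i by simp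
    finally show "(X *\<^sub>v y') $ i = 0\<^sub>v D $ i" using i by simp
  qed (use X in simp)
  have adj: "adj_mat X * X = det X \<cdot>\<^sub>m 1\<^sub>m D" using adj_mat[OF X] by simp
  have "(adj_mat X * X) *\<^sub>v y' = adj_mat X *\<^sub>v (X *\<^sub>v y')"
    by (rule assoc_mult_mat_vec) (use adj_mat[OF X] X y' in auto)
  also have "\<dots> = 0\<^sub>v D" unfolding Xy by (rule eq_vecI) (use adj_mat[OF X] in \<open>auto simp: scalar_prod_def\<close>)
  finally have "(det X \<cdot>\<^sub>m 1\<^sub>m D) *\<^sub>v y' = 0\<^sub>v D" using adj by simp
  hence "((det X \<cdot>\<^sub>m 1\<^sub>m D) *\<^sub>v y') $ k = 0" using k(1) by simp
  moreover have "((det X \<cdot>\<^sub>m 1\<^sub>m D) *\<^sub>v y') $ k = det X * y' $ k"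
    using k y' by simp
  moreover have "y' $ k = 1" using k by (simp add: y'_def)
  ultimately show ?thesis by simp
qed

locale gsetting =
  fixes n N :: nat and src tgt :: "nat \<Rightarrow> nat" and v d :: nat
  assumes lg: "loopless_graph n N src tgt" and vn: "v < n" and dn: "d < n"
    and vert: "{e \<in> {1..N}. src e = v \<or> tgt e = v} = {1, 2, 3}"
begin

lemma N3: "3 \<le> N"
proof -
  have "3 \<in> {e \<in> {1..N}. src e = v \<or> tgt e = v}" using vert by simp
  thus ?thesis by simp
qed

lemma n1: "1 \<le> n" using vn by simp

lemma edge: "e \<in> {1..N} \<Longrightarrow> src e < n \<and> tgt e < n \<and> src e \<noteq> tgt e"
  using lg unfolding loopless_graph_def by blast

lemma eps_sum_vcol: assumes e: "e \<in> {1..N}"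
  shows "(\<Sum>k<n-1. of_int (eps src tgt e (vcol d k)) :: 'a::comm_ring_1) = - of_int (eps src tgt e d)"
proof -
  have "(\<Sum>k<n-1. of_int (eps src tgt e (vcol d k)) :: 'a) = (\<Sum>p\<in>{..<n}-{d}. of_int (eps src tgt e p))"
    by (rule sum_vcol[OF dn])
  moreover have "(\<Sum>p<n. of_int (eps src tgt e p) :: 'a) = of_int (eps src tgt e d) + (\<Sum>p\<in>{..<n}-{d}. of_int (eps src tgt e p))"
    by (rule sum.remove) (use dn in auto)
  moreover have "(\<Sum>p<n. of_int (eps src tgt e p) :: 'a) = 0"
    using eps_sum_h[of src e tgt n "\<lambda>_. 1"] edge[OF e] by simp
  ultimately show ?thesis by (simp add: eq_neg_iff_add_eq_0 add.commute)
qed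

definition pot :: "'a::comm_ring_1 vec \<Rightarrow> nat \<Rightarrow> 'a" where
  "pot z e = (\<Sum>k<n-1. of_int (eps src tgt e (vcol d k)) * z $ (N+k))"

definition dv :: "'a::comm_ring_1 vec \<Rightarrow> nat \<Rightarrow> 'a" where
  "dv z k = (\<Sum>j<N. of_int (eps src tgt (Suc j) (vcol d k)) * z $ j)"

definition gmn :: "(nat \<Rightarrow> 'a::comm_ring_1) \<Rightarrow> nat set \<Rightarrow> 'a mat" where
  "gmn a K = mat (N + n - 1) (N + n - 1) (\<lambda>(i,j).
     if i < N \<and> j < N then (if i = j \<and> Suc i \<notin> K then a (Suc i) else 0)
     else if i < N then of_int (eps src tgt (Suc i) (vcol d (j - N)))
     else if j < N then of_int (- eps src tgt (Suc j) (vcol d (i - N)))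
     else 0)"

lemma gmn_carrier: "gmn a K \<in> carrier_mat (N+n-1) (N+n-1)" by (simp add: gmn_def)

lemma gm_carrier: "graph_matrix n N src tgt d K \<in> carrier_mat (N+n-1) (N+n-1)"
  by (simp add: graph_matrix_def)

lemma gm_eval: "map_mat (mp_eval a) (graph_matrix n N src tgt d K) = gmn a K"
  by (rule eq_matI) (auto simp: graph_matrix_def gmn_def)

lemma gmn_row_edge: assumes i: "i < N" and z: "z \<in> carrier_vec (N+n-1)"
  shows "(gmn a K *\<^sub>v z) $ i = (if Suc i \<in> K then 0 else a (Suc i) * z $ i) + pot z (Suc i)"
proof -
  have D: "N + n - 1 = N + (n - 1)" using n1 by simp
  have "(gmn a K *\<^sub>v z) $ i = (\<Sum>j<N+n-1. gmn a K $$ (i,j) * z $ j)"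
    using i z n1 carrier_matD[OF gmn_carrier[of a K]] by (simp add: scalar_prod_def atLeast0LessThan)
  also have "\<dots> = (\<Sum>j<N+(n-1). gmn a K $$ (i,j) * z $ j)" by (simp only: D)
  also have "\<dots> = (\<Sum>j<N. gmn a K $$ (i,j) * z $ j) + (\<Sum>k<n-1. gmn a K $$ (i,N+k) * z $ (N+k))"
    by (rule sum_split_at)
  also have "(\<Sum>j<N. gmn a K $$ (i,j) * z $ j) = (\<Sum>j<N. if j = i then (if Suc i \<in> K then 0 else a (Suc i) * z $ i) else 0)"
    by (rule sum.cong) (use i n1 in \<open>auto simp: gmn_def\<close>)
  also have "\<dots> = (if Suc i \<in> K then 0 else a (Suc i) * z $ i)" using i by simp
  also have "(\<Sum>k<n-1. gmn a K $$ (i,N+k) * z $ (N+k)) = pot z (Suc i)"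
    unfolding pot_def by (rule sum.cong) (use i n1 in \<open>auto simp: gmn_def\<close>)
  finally show ?thesis .
qed

lemma gmn_row_vert: assumes k: "k < n - 1" and z: "z \<in> carrier_vec (N+n-1)"
  shows "(gmn a K *\<^sub>v z) $ (N+k) = - dv z k"
proof -
  have D: "N + n - 1 = N + (n - 1)" using n1 by simp
  have "(gmn a K *\<^sub>v z) $ (N+k) = (\<Sum>j<N+n-1. gmn a K $$ (N+k,j) * z $ j)"
    using k z carrier_matD[OF gmn_carrier[of a K]] by (simp add: scalar_prod_def atLeast0LessThan)
  also have "\<dots> = (\<Sum>j<N+(n-1). gmn a K $$ (N+k,j) * z $ j)" by (simp only: D)
  also have "\<dots> = (\<Sum>j<N. gmn a K $$ (N+k,j) * z $ j) + (\<Sum>k'<n-1. gmn a K $$ (N+k,N+k') * z $ (N+k'))"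
    by (rule sum_split_at)
  also have "(\<Sum>k'<n-1. gmn a K $$ (N+k,N+k') * z $ (N+k')) = 0"
    by (rule sum.neutral) (use k n1 in \<open>auto simp: gmn_def\<close>)
  also have "(\<Sum>j<N. gmn a K $$ (N+k,j) * z $ j) = (\<Sum>j<N. - (of_int (eps src tgt (Suc j) (vcol d k)) * z $ j))"
    by (rule sum.cong) (use k n1 in \<open>auto simp: gmn_def\<close>)
  also have "\<dots> = - dv z k" unfolding dv_def by (simp add: sum_negf)
  finally show ?thesis by simp
qed


definition Fn :: "(nat \<Rightarrow> 'a::comm_ring_1) \<Rightarrow> 'a mat" where
  "Fn a = rr (rr (gmn a {}) 0 1) 2 2"

definition Cn :: "(nat \<Rightarrow> 'a::comm_ring_1) \<Rightarrow> 'a mat" where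
  "Cn a = rr (gmn a {3}) 0 1"

lemma Fn_carrier: "Fn a \<in> carrier_mat (N+n-1) (N+n-1)"
  unfolding Fn_def by (intro rr_carrier gmn_carrier)

lemma Cn_carrier: "Cn a \<in> carrier_mat (N+n-1) (N+n-1)"
  unfolding Cn_def by (intro rr_carrier gmn_carrier)

lemma D3: "3 \<le> N + n - 1" using N3 n1 by simp

lemma Fn_rows: assumes z: "z \<in> carrier_vec (N+n-1)"
  shows "(Fn a *\<^sub>v z) $ 0 = z $ 1"
    and "(Fn a *\<^sub>v z) $ 2 = z $ 2"
    and "i < N \<Longrightarrow> i \<noteq> 0 \<Longrightarrow> i \<noteq> 2 \<Longrightarrow> (Fn a *\<^sub>v z) $ i = a (Suc i) * z $ i + pot z (Suc i)"
    and "k < n - 1 \<Longrightarrow> (Fn a *\<^sub>v z) $ (N+k) = - dv z k"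
proof -
  have C1: "rr (gmn a {}) 0 1 \<in> carrier_mat (N+n-1) (N+n-1)" by (intro rr_carrier gmn_carrier)
  note R2 = rr_mult_vec[OF C1 z, where r=2 and c=2]
  note R1 = rr_mult_vec[OF gmn_carrier[of a "{}"] z, where r=0 and c=1]
  show "(Fn a *\<^sub>v z) $ 0 = z $ 1" unfolding Fn_def using R2[of 0] R1[of 0] D3 by simp
  show "(Fn a *\<^sub>v z) $ 2 = z $ 2" unfolding Fn_def using R2[of 2] D3 by simp
  show "i < N \<Longrightarrow> i \<noteq> 0 \<Longrightarrow> i \<noteq> 2 \<Longrightarrow> (Fn a *\<^sub>v z) $ i = a (Suc i) * z $ i + pot z (Suc i)"
    unfolding Fn_def using R2[of i] R1[of i] D3 n1 gmn_row_edge[OF _ z, of i a "{}"] by simp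
  show "k < n - 1 \<Longrightarrow> (Fn a *\<^sub>v z) $ (N+k) = - dv z k"
    unfolding Fn_def using R2[of "N+k"] R1[of "N+k"] D3 N3 gmn_row_vert[OF _ z, of k a "{}"] by simp
qed

lemma Cn_rows: assumes z: "z \<in> carrier_vec (N+n-1)"
  shows "(Cn a *\<^sub>v z) $ 0 = z $ 1"
    and "(Cn a *\<^sub>v z) $ 2 = pot z 3"
    and "i < N \<Longrightarrow> i \<noteq> 0 \<Longrightarrow> i \<noteq> 2 \<Longrightarrow> (Cn a *\<^sub>v z) $ i = a (Suc i) * z $ i + pot z (Suc i)"
    and "k < n - 1 \<Longrightarrow> (Cn a *\<^sub>v z) $ (N+k) = - dv z k"
proof -
  note R1 = rr_mult_vec[OF gmn_carrier[of a "{3}"] z, where r=0 and c=1]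
  show "(Cn a *\<^sub>v z) $ 0 = z $ 1" unfolding Cn_def using R1[of 0] D3 by simp
  show "(Cn a *\<^sub>v z) $ 2 = pot z 3" unfolding Cn_def using R1[of 2] D3 N3 gmn_row_edge[OF _ z, of 2 a "{3}"]
    by (simp add: numeral_3_eq_3)
  show "i < N \<Longrightarrow> i \<noteq> 0 \<Longrightarrow> i \<noteq> 2 \<Longrightarrow> (Cn a *\<^sub>v z) $ i = a (Suc i) * z $ i + pot z (Suc i)"
    unfolding Cn_def using R1[of i] D3 n1 gmn_row_edge[OF _ z, of i a "{3}"] by (simp add: numeral_3_eq_3)
  show "k < n - 1 \<Longrightarrow> (Cn a *\<^sub>v z) $ (N+k) = - dv z k"
    unfolding Cn_def using R1[of "N+k"] D3 N3 gmn_row_vert[OF _ z, of k a "{3}"] by simp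
qed

lemma stepA: fixes z :: "'a::field vec"
  assumes z1: "z $ 1 = 0" and z2: "z $ 2 = 0" and dv0: "\<And>k. k < n - 1 \<Longrightarrow> dv z k = 0"
  shows "z $ 0 = 0"
proof -
  have e1m: "1 \<in> {e \<in> {1..N}. src e = v \<or> tgt e = v}" using vert by simp
  hence e1: "src 1 = v \<or> tgt 1 = v" by simp
  have e1': "src 1 \<noteq> tgt 1" using edge[of 1] e1m by auto
  have eps1: "of_int (eps src tgt 1 v) \<noteq> (0::'a)"
    using e1 e1' by (auto simp: eps_def)
  have other: "eps src tgt (Suc j) v = 0" if "j < N" "j \<noteq> 0" "j \<noteq> 1" "j \<noteq> 2" for j
  proof -
    have "Suc j \<notin> {e \<in> {1..N}. src e = v \<or> tgt e = v}" using vert that by auto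
    hence "src (Suc j) \<noteq> v \<and> tgt (Suc j) \<noteq> v" using that by auto
    thus ?thesis by (auto simp: eps_def)
  qed
  have key: "(\<Sum>j<N. of_int (eps src tgt (Suc j) v) * z $ j) = of_int (eps src tgt 1 v) * z $ 0"
  proof -
    have "(\<Sum>j<N. of_int (eps src tgt (Suc j) v) * z $ j) =
      of_int (eps src tgt (Suc 0) v) * z $ 0 + (\<Sum>j\<in>{..<N}-{0}. of_int (eps src tgt (Suc j) v) * z $ j)"
      by (rule sum.remove) (use N3 in auto)
    also have "(\<Sum>j\<in>{..<N}-{0}. of_int (eps src tgt (Suc j) v) * z $ j) = 0"
    proof (rule sum.neutral, intro ballI)
      fix j assume j: "j \<in> {..<N} - {0}"
      show "of_int (eps src tgt (Suc j) v) * z $ j = 0"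
        using j other[of j] z1 z2 by (cases "j = 1 \<or> j = 2") auto
    qed
    finally show ?thesis by simp
  qed
  show ?thesis
  proof (cases "v = d")
    case False
    define k where "k = (if v < d then v else v - 1)"
    have k: "k < n - 1" "vcol d k = v" using False vn dn by (auto simp: k_def vcol_def)
    have "dv z k = of_int (eps src tgt 1 v) * z $ 0" unfolding dv_def k(2) by (rule key)
    with dv0[OF k(1)] eps1 show ?thesis by simp
  next
    case True
    have "0 = (\<Sum>k<n-1. dv z k)" using dv0 by simp
    also have "\<dots> = (\<Sum>j<N. z $ j * (\<Sum>k<n-1. of_int (eps src tgt (Suc j) (vcol d k))))"
      unfolding dv_def by (subst sum.swap) (simp add: sum_distrib_left ac_simps)
    also have "\<dots> = (\<Sum>j<N. - (of_int (eps src tgt (Suc j) v) * z $ j))"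
    proof (rule sum.cong[OF refl])
      fix j assume "j \<in> {..<N}"
      hence "Suc j \<in> {1..N}" by auto
      thus "z $ j * (\<Sum>k<n-1. of_int (eps src tgt (Suc j) (vcol d k))) = - (of_int (eps src tgt (Suc j) v) * z $ j)"
        by (subst eps_sum_vcol[OF \<open>Suc j \<in> {1..N}\<close>]) (simp add: True algebra_simps)
    qed
    also have "\<dots> = - (of_int (eps src tgt 1 v) * z $ 0)" by (simp add: sum_negf key)
    finally show ?thesis using eps1 by simp
  qed
qed

lemma pairing: fixes w u :: "'a::comm_ring_1 vec"
  assumes w0: "\<And>j. j < 3 \<Longrightarrow> w $ j = 0" and dv0: "\<And>k. k < n - 1 \<Longrightarrow> dv w k = 0"
  shows "(\<Sum>i\<in>{3..<N}. w $ i * pot u (Suc i)) = 0"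
proof -
  have "(\<Sum>i\<in>{3..<N}. w $ i * pot u (Suc i)) =
     (\<Sum>i\<in>{3..<N}. \<Sum>k<n-1. u $ (N+k) * (of_int (eps src tgt (Suc i) (vcol d k)) * w $ i))"
    unfolding pot_def by (simp add: sum_distrib_left ac_simps)
  also have "\<dots> = (\<Sum>k<n-1. u $ (N+k) * (\<Sum>i\<in>{3..<N}. of_int (eps src tgt (Suc i) (vcol d k)) * w $ i))"
    by (subst sum.swap) (simp add: sum_distrib_left)
  also have "\<dots> = (\<Sum>k<n-1. u $ (N+k) * dv w k)"
  proof (rule sum.cong[OF refl])
    fix k assume "k \<in> {..<n-1}"
    have "(\<Sum>i\<in>{3..<N}. of_int (eps src tgt (Suc i) (vcol d k)) * w $ i) = dv w k"
      unfolding dv_def by (rule sum.mono_neutral_left) (use w0 in auto)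
    thus "u $ (N+k) * (\<Sum>i\<in>{3..<N}. of_int (eps src tgt (Suc i) (vcol d k)) * w $ i) = u $ (N+k) * dv w k"
      by simp
  qed
  also have "\<dots> = 0" using dv0 by simp
  finally show ?thesis .
qed

lemma lin_comb: fixes A :: "'a::comm_ring_1 mat"
  assumes A: "A \<in> carrier_mat m m" and x: "x \<in> carrier_vec m" and y: "y \<in> carrier_vec m" and i: "i < m"
  shows "(A *\<^sub>v vec m (\<lambda>j. c1 * x $ j - c2 * y $ j)) $ i = c1 * (A *\<^sub>v x) $ i - c2 * (A *\<^sub>v y) $ i"
  using A x y i by (simp add: scalar_prod_def sum_subtractf sum_distrib_left algebra_simps)

lemma pot_lin: assumes x: "x \<in> carrier_vec (N+n-1)"
  shows "pot (vec (N+n-1) (\<lambda>j. c1 * x $ j - c2 * y $ j)) e = c1 * pot x e - c2 * pot y e"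
proof -
  have "pot (vec (N+n-1) (\<lambda>j. c1 * x $ j - c2 * y $ j)) e =
     (\<Sum>k<n-1. of_int (eps src tgt e (vcol d k)) * (c1 * x $ (N+k) - c2 * y $ (N+k)))"
    unfolding pot_def by (rule sum.cong) (use n1 in auto)
  thus ?thesis unfolding pot_def by (simp add: sum_subtractf sum_distrib_left algebra_simps)
qed



lemma kernel_D: fixes y :: "'a::field vec"
  assumes y: "y \<in> carrier_vec (N+n-1)" and ny: "y \<noteq> 0\<^sub>v (N+n-1)"
    and Fy: "\<And>i. i < N+n-1 \<Longrightarrow> (Fn a *\<^sub>v y) $ i = 0" and p3: "pot y 3 = 0"
  shows "det (Cn a) = 0"
proof -
  have "Cn a *\<^sub>v y = 0\<^sub>v (N+n-1)"
  proof (rule eq_vecI)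
    fix i assume "i < dim_vec (0\<^sub>v (N+n-1) :: 'a vec)"
    hence i: "i < N+n-1" by simp
    have "(Cn a *\<^sub>v y) $ i = 0"
    proof (cases "i < N")
      case True
      show ?thesis
      proof (cases "i = 0")
        case True thus ?thesis using Cn_rows(1)[OF y] Fn_rows(1)[OF y] Fy[of 0] D3 by simp
      next
        case False
        show ?thesis
        proof (cases "i = 2")
          case True thus ?thesis using Cn_rows(2)[OF y] p3 by simp
        next
          case False
          thus ?thesis using Cn_rows(3)[OF y, of i a] Fn_rows(3)[OF y, of i a] Fy[OF i] \<open>i < N\<close> \<open>i \<noteq> 0\<close> by simp
        qed
      qed
    next
      case False
      define k where "k = i - N"
      have ik: "i = N + k" "k < n - 1" using False i by (auto simp: k_def)
      show ?thesis using Cn_rows(4)[OF y ik(2)] Fn_rows(4)[OF y ik(2)] Fy[OF i] ik(1) by simp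
    qed
    thus "(Cn a *\<^sub>v y) $ i = 0\<^sub>v (N+n-1) $ i" using i by simp
  qed (simp add: carrier_matD(1)[OF Cn_carrier[of a]])
  hence "\<exists>v. v \<in> carrier_vec (N+n-1) \<and> v \<noteq> 0\<^sub>v (N+n-1) \<and> Cn a *\<^sub>v v = 0\<^sub>v (N+n-1)"
    using y ny by (intro exI[of _ y] conjI)
  thus ?thesis using det_0_iff_vec_prod_zero_field[OF Cn_carrier[of a]] by simp
qed



lemma core: fixes a :: "nat \<Rightarrow> 'a::field"
  assumes f0: "det (Fn a) = 0" and fe: "\<And>i. i \<in> {3..<N} \<Longrightarrow> det (rr (Fn a) i i) = 0"
    and g0: "det (Cn a) \<noteq> 0"
  shows "\<exists>y\<in>carrier_vec (N+n-1). y \<noteq> 0\<^sub>v (N+n-1) \<and> (\<forall>j<N. y $ j = 0) \<and> Fn a *\<^sub>v y = 0\<^sub>v (N+n-1)"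
proof -
  let ?D = "N+n-1"
  have "\<exists>v. v \<in> carrier_vec ?D \<and> v \<noteq> 0\<^sub>v ?D \<and> Fn a *\<^sub>v v = 0\<^sub>v ?D"
    using det_0_iff_vec_prod_zero_field[OF Fn_carrier[of a]] f0 by simp
  then obtain z0 where z0: "z0 \<in> carrier_vec ?D" "z0 \<noteq> 0\<^sub>v ?D" "Fn a *\<^sub>v z0 = 0\<^sub>v ?D"
    by (elim exE conjE)
  have c0: "(Fn a *\<^sub>v z0) $ i = 0" if "i < ?D" for i using z0(3) that by simp
  have z01: "z0 $ 1 = 0" using c0[of 0] Fn_rows(1)[OF z0(1)] D3 by simp
  have z02: "z0 $ 2 = 0" using c0[of 2] Fn_rows(2)[OF z0(1)] D3 by simp
  have dv0: "dv z0 k = 0" if k: "k < n - 1" for k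
  proof -
    have "N + k < ?D" using k by simp
    from c0[OF this] Fn_rows(4)[OF z0(1) k] show ?thesis by simp
  qed
  have z00: "z0 $ 0 = 0" by (rule stepA[OF z01 z02 dv0])
  have w0: "z0 $ j = 0" if "j < 3" for j
    using that z00 z01 z02 by (auto simp: numeral_3_eq_3 numeral_2_eq_2 less_Suc_eq)
  have rowsH0: "a (Suc i) * z0 $ i + pot z0 (Suc i) = 0" if "i \<in> {3..<N}" for i
    using c0[of i] Fn_rows(3)[OF z0(1), of i a] that n1 by auto
  show ?thesis
  proof (cases "\<forall>i\<in>{3..<N}. z0 $ i = 0")
    case True
    have "\<forall>j<N. z0 $ j = 0"
    proof (intro allI impI)
      fix j assume "j < N"
      show "z0 $ j = 0"
      proof (cases "j < 3")
        case True thus ?thesis using w0 by simp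
      next
        case False thus ?thesis using \<open>j < N\<close> \<open>\<forall>i\<in>{3..<N}. z0 $ i = 0\<close> by auto
      qed
    qed
    thus ?thesis using z0 by blast
  next
    case False
    then obtain i0 where i0: "i0 \<in> {3..<N}" "z0 $ i0 \<noteq> 0" by blast
    have "\<exists>v. v \<in> carrier_vec ?D \<and> v \<noteq> 0\<^sub>v ?D \<and> rr (Fn a) i0 i0 *\<^sub>v v = 0\<^sub>v ?D"
      using det_0_iff_vec_prod_zero_field[OF rr_carrier[OF Fn_carrier[of a]]] fe[OF i0(1)] by simp
    then obtain z where z: "z \<in> carrier_vec ?D" "z \<noteq> 0\<^sub>v ?D" "rr (Fn a) i0 i0 *\<^sub>v z = 0\<^sub>v ?D"
      by (elim exE conjE)
    have i0D: "i0 < ?D" using i0 n1 by auto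
    have RR: "(rr (Fn a) i0 i0 *\<^sub>v z) $ i = (if i = i0 then z $ i0 else (Fn a *\<^sub>v z) $ i)" if "i < ?D" for i
      by (rule rr_mult_vec[OF Fn_carrier z(1) that i0D])
    have zi0: "z $ i0 = 0" using RR[OF i0D] z(3) i0D by simp
    have c1: "(Fn a *\<^sub>v z) $ i = 0" if "i < ?D" "i \<noteq> i0" for i
    proof -
      have "(rr (Fn a) i0 i0 *\<^sub>v z) $ i = 0" using z(3) that by simp
      thus ?thesis using RR[OF that(1)] that(2) by simp
    qed
    have z1: "z $ 1 = 0" using c1[of 0] Fn_rows(1)[OF z(1)] D3 i0 by auto
    have z2: "z $ 2 = 0" using c1[of 2] Fn_rows(2)[OF z(1)] D3 i0 by auto
    have dvz: "dv z k = 0" if k: "k < n - 1" for k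
    proof -
      have "N + k < ?D" "N + k \<noteq> i0" using k i0 by auto
      from c1[OF this] Fn_rows(4)[OF z(1) k] show ?thesis by simp
    qed
    have zz0: "z $ 0 = 0" by (rule stepA[OF z1 z2 dvz])
    have w0': "z $ j = 0" if "j < 3" for j
      using that zz0 z1 z2 by (auto simp: numeral_3_eq_3 numeral_2_eq_2 less_Suc_eq)
    have rowsH: "a (Suc i) * z $ i + pot z (Suc i) = 0" if "i \<in> {3..<N}" "i \<noteq> i0" for i
      using c1[of i] Fn_rows(3)[OF z(1), of i a] that n1 by auto
    have P1: "(\<Sum>i\<in>{3..<N}. z0 $ i * pot z (Suc i)) = 0" by (rule pairing[OF w0 dv0])
    have P2: "(\<Sum>i\<in>{3..<N}. z $ i * pot z0 (Suc i)) = 0" by (rule pairing[OF w0' dvz])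
    have S1: "(\<Sum>i\<in>{3..<N}. z $ i * (a (Suc i) * z0 $ i + pot z0 (Suc i))) = 0"
      using rowsH0 by simp
    have "(\<Sum>i\<in>{3..<N}. z $ i * (a (Suc i) * z0 $ i + pot z0 (Suc i))) =
       (\<Sum>i\<in>{3..<N}. z0 $ i * (a (Suc i) * z $ i)) + (\<Sum>i\<in>{3..<N}. z $ i * pot z0 (Suc i))"
      by (simp add: sum.distrib algebra_simps)
    hence Q: "(\<Sum>i\<in>{3..<N}. z0 $ i * (a (Suc i) * z $ i)) = 0" using S1 P2 by simp
    have "(\<Sum>i\<in>{3..<N}. z0 $ i * (a (Suc i) * z $ i + pot z (Suc i))) =
       (\<Sum>i\<in>{3..<N}. z0 $ i * (a (Suc i) * z $ i)) + (\<Sum>i\<in>{3..<N}. z0 $ i * pot z (Suc i))"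
      by (simp add: sum.distrib algebra_simps)
    hence S2: "(\<Sum>i\<in>{3..<N}. z0 $ i * (a (Suc i) * z $ i + pot z (Suc i))) = 0" using Q P1 by simp
    have "(\<Sum>i\<in>{3..<N}. z0 $ i * (a (Suc i) * z $ i + pot z (Suc i))) =
       z0 $ i0 * (a (Suc i0) * z $ i0 + pot z (Suc i0)) + (\<Sum>i\<in>{3..<N}-{i0}. z0 $ i * (a (Suc i) * z $ i + pot z (Suc i)))"
      by (rule sum.remove) (use i0 in auto)
    also have "(\<Sum>i\<in>{3..<N}-{i0}. z0 $ i * (a (Suc i) * z $ i + pot z (Suc i))) = 0"
      by (rule sum.neutral) (use rowsH in auto)
    finally have "z0 $ i0 * (a (Suc i0) * z $ i0 + pot z (Suc i0)) = 0" using S2 by simp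
    hence pz: "pot z (Suc i0) = 0" using i0(2) zi0 by simp
    have zF: "(Fn a *\<^sub>v z) $ i = 0" if i: "i < ?D" for i
    proof (cases "i = i0")
      case True thus ?thesis using Fn_rows(3)[OF z(1), of i0 a] i0 zi0 pz by auto
    next
      case False thus ?thesis using c1 i by auto
    qed
    show ?thesis
    proof (cases "pot z 3 = 0")
      case True
      have "det (Cn a) = 0" by (rule kernel_D[OF z(1) z(2) zF True])
      with g0 show ?thesis by simp
    next
      case F1: False
      show ?thesis
      proof (cases "pot z0 3 = 0")
        case True
        have "det (Cn a) = 0" by (rule kernel_D[OF z0(1) z0(2) c0 True])
        with g0 show ?thesis by simp
      next
        case False
        define y where "y = vec ?D (\<lambda>j. pot z0 3 * z $ j - pot z 3 * z0 $ j)"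
        have y: "y \<in> carrier_vec ?D" by (simp add: y_def)
        have yF: "(Fn a *\<^sub>v y) $ i = 0" if "i < ?D" for i
          unfolding y_def using lin_comb[OF Fn_carrier z(1) z0(1) that] zF[OF that] c0[OF that] by simp
        have py: "pot y 3 = 0" unfolding y_def pot_lin[OF z(1)] by (simp add: mult.commute)
        have yi0: "y $ i0 \<noteq> 0" using i0D zi0 i0(2) F1 by (simp add: y_def)
        have "y \<noteq> 0\<^sub>v ?D" using yi0 i0D by auto
        from kernel_D[OF y this yF py] g0 show ?thesis by simp
      qed
    qed
  qed
qed

definition Fs :: "'a::comm_ring_1 mpoly mat" where
  "Fs = rr (rr (graph_matrix n N src tgt d {}) 0 1) 2 2"

definition Cs :: "'a::comm_ring_1 mpoly mat" where
  "Cs = rr (graph_matrix n N src tgt d {3}) 0 1"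

lemma Fs_carrier: "Fs \<in> carrier_mat (N+n-1) (N+n-1)"
  unfolding Fs_def by (intro rr_carrier gm_carrier)

lemma f_eq: "dodgson n N src tgt d {1,3} {2,3} {} = - det (Fs :: 'a::comm_ring_1 mpoly mat)"
proof -
  have S: "{i. i < N+n-1 \<and> Suc i \<notin> {1,3} \<or> N \<le> i} = {i. i \<noteq> 0 \<and> i \<noteq> 2}" using N3 n1 by auto
  have T: "{j. j < N+n-1 \<and> Suc j \<notin> {2,3} \<or> N \<le> j} = {j. j \<noteq> 1 \<and> j \<noteq> 2}" using N3 n1 by auto
  show ?thesis unfolding dodgson_def S T Fs_def by (rule det_f_chain[OF gm_carrier D3])
qed

lemma g_eq: "dodgson n N src tgt d {1} {2} {3} = - det (Cs :: 'a::comm_ring_1 mpoly mat)"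
proof -
  have S: "{i. i < N+n-1 \<and> Suc i \<notin> {1} \<or> N \<le> i} = {i. i \<noteq> 0}" using N3 n1 by auto
  have T: "{j. j < N+n-1 \<and> Suc j \<notin> {2} \<or> N \<le> j} = {j. j \<noteq> 1}" using N3 n1 by auto
  show ?thesis unfolding dodgson_def S T Cs_def by (rule det_g_chain[OF gm_carrier]) (use D3 in simp)
qed

lemma Fs_eval: "map_mat (mp_eval a) Fs = Fn a"
  unfolding Fs_def Fn_def by (simp add: map_rr gm_eval mp_eval_one)

lemma Cs_eval: "map_mat (mp_eval a) Cs = Cn a"
  unfolding Cs_def Cn_def by (simp add: map_rr gm_eval mp_eval_one)

lemma gm_index: "r < N+n-1 \<Longrightarrow> c < N+n-1 \<Longrightarrow> graph_matrix n N src tgt d K $$ (r,c) =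
  (if r < N \<and> c < N then (if r = c \<and> Suc r \<notin> K then mp_var (Suc r) else 0)
   else if r < N then mp_const (of_int (eps src tgt (Suc r) (vcol d (c - N))))
   else if c < N then mp_const (of_int (- eps src tgt (Suc c) (vcol d (r - N))))
   else 0)"
  by (simp add: graph_matrix_def)

lemma Fs_index: "r < N+n-1 \<Longrightarrow> c < N+n-1 \<Longrightarrow> Fs $$ (r,c) =
  (if r = 2 then (if c = 2 then 1 else 0) else if r = 0 then (if c = 1 then 1 else 0)
   else graph_matrix n N src tgt d {} $$ (r,c))"
  unfolding Fs_def rr_def using carrier_matD[OF gm_carrier[of "{}", where 'a='a]] N3 n1 by simp

lemma Fs_efree: assumes i: "i \<in> {3..<N}" and r: "r < N+n-1" and c: "c < N+n-1" and rc: "(r,c) \<noteq> (i,i)"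
  shows "efree (Suc i) (Fs $$ (r,c))"
  unfolding Fs_index[OF r c] gm_index[OF r c] using i rc by (auto simp: efree_0 efree_1 efree_const efree_var)

lemma Fs_diag: assumes i: "i \<in> {3..<N}" shows "Fs $$ (i,i) = mp_var (Suc i)"
proof -
  have r: "i < N+n-1" using i n1 by auto
  show ?thesis unfolding Fs_index[OF r r] gm_index[OF r r] using i by simp
qed

lemma Fs_const: assumes r: "r < N+n-1" and j: "j < N+n-1" "N \<le> j"
  shows "Fs $$ (r,j) = mp_const (mp_eval a (Fs $$ (r,j)))"
  unfolding Fs_index[OF r j(1)] gm_index[OF r j(1)] using j N3 by simp

lemma deriv: assumes i: "i \<in> {3..<N}"
  shows "mp_pderiv (Suc i) (det (Fs :: 'a::comm_ring_1 mpoly mat)) = det (rr Fs i i)"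
proof -
  let ?D = "N+n-1"
  have iD: "i < ?D" using i n1 by auto
  have "det (Fs :: 'a mpoly mat) = (\<Sum>j<?D. Fs $$ (i,j) * cofactor Fs i j)"
    by (rule laplace_expansion_row[OF Fs_carrier iD])
  also have "\<dots> = Fs $$ (i,i) * cofactor Fs i i + (\<Sum>j\<in>{..<?D}-{i}. Fs $$ (i,j) * cofactor Fs i j)"
    by (rule sum.remove) (use iD in auto)
  finally have eq: "det (Fs :: 'a mpoly mat) = mp_var (Suc i) * cofactor Fs i i + (\<Sum>j\<in>{..<?D}-{i}. Fs $$ (i,j) * cofactor Fs i j)"
    using Fs_diag[OF i, where 'a='a] by simp
  have cof: "efree (Suc i) (cofactor (Fs :: 'a mpoly mat) i j)" if "j < ?D" for j
  proof -
    have "efree (Suc i) (det (mat_delete (Fs :: 'a mpoly mat) i j))"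
    proof (rule efree_det)
      fix r c assume rc: "r < dim_row (mat_delete (Fs :: 'a mpoly mat) i j)" "c < dim_col (mat_delete (Fs :: 'a mpoly mat) i j)"
      thus "efree (Suc i) (mat_delete (Fs :: 'a mpoly mat) i j $$ (r,c))"
        using Fs_carrier[where 'a='a] by (auto simp: mat_delete_def intro!: Fs_efree[OF i])
    qed
    thus ?thesis unfolding cofactor_def by (intro efree_mult efree_power efree_uminus efree_1)
  qed
  have "efree (Suc i) (\<Sum>j\<in>{..<?D}-{i}. (Fs :: 'a mpoly mat) $$ (i,j) * cofactor Fs i j)"
    by (rule efree_sum) (use iD in \<open>auto intro!: efree_mult cof Fs_efree[OF i]\<close>)
  hence "mp_pderiv (Suc i) (det (Fs :: 'a mpoly mat)) = cofactor Fs i i"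
    unfolding eq by (rule pderiv_lin[OF cof[OF iD]])
  also have "\<dots> = det (rr Fs i i)" by (rule det_rr[OF Fs_carrier iD iD, symmetric])
  finally show ?thesis .
qed

theorem main: "open_hypersurface_smooth {4..N}
           (dodgson n N src tgt d {1,3} {2,3} {} :: 'k::field mpoly)
           (dodgson n N src tgt d {1} {2} {3})"
proof -
  let ?f = "dodgson n N src tgt d {1,3} {2,3} {} :: 'k mpoly"
  let ?g = "dodgson n N src tgt d {1} {2} {3} :: 'k mpoly"
  let ?D = "N+n-1"
  have "?f = 0 \<or> (\<forall>a :: nat \<Rightarrow> 'k. (\<exists>e\<in>{4..N}. a e \<noteq> 0) \<longrightarrow> mp_eval a ?f = 0 \<longrightarrow> mp_eval a ?g \<noteq> 0 \<longrightarrow>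
        (\<exists>e\<in>{4..N}. mp_eval a (mp_pderiv e ?f) \<noteq> 0))"
  proof (cases "?f = 0")
    case True thus ?thesis by (rule disjI1)
  next
    case False
    hence nz: "?f \<noteq> 0" .
    show ?thesis
    proof (rule disjI2)
    show "\<forall>a :: nat \<Rightarrow> 'k. (\<exists>e\<in>{4..N}. a e \<noteq> 0) \<longrightarrow> mp_eval a ?f = 0 \<longrightarrow> mp_eval a ?g \<noteq> 0 \<longrightarrow>
        (\<exists>e\<in>{4..N}. mp_eval a (mp_pderiv e ?f) \<noteq> 0)"
    proof (intro allI impI)
      fix a :: "nat \<Rightarrow> 'k"
      assume fa: "mp_eval a ?f = 0" and ga: "mp_eval a ?g \<noteq> 0"
      show "\<exists>e\<in>{4..N}. mp_eval a (mp_pderiv e ?f) \<noteq> 0"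
      proof (rule ccontr)
        assume "\<not> ?thesis"
        hence pd: "mp_eval a (mp_pderiv e ?f) = 0" if "e \<in> {4..N}" for e using that by blast
        have dF: "det (Fn a) = mp_eval a (det Fs)" unfolding Fs_eval[symmetric] by simp
        have dC: "det (Cn a) = mp_eval a (det Cs)" unfolding Cs_eval[symmetric] by simp
        have f0: "det (Fn a) = 0" using fa unfolding f_eq dF by (simp add: mp_eval_hom.hom_uminus)
        have g0: "det (Cn a) \<noteq> 0" using ga unfolding g_eq dC by (simp add: mp_eval_hom.hom_uminus)
        have fe: "det (rr (Fn a) i i) = 0" if i: "i \<in> {3..<N}" for i
        proof -
          have "det (rr (Fn a) i i) = mp_eval a (det (rr Fs i i))"
          proof -
            have "map_mat (mp_eval a) (rr Fs i i) = rr (Fn a) i i" by (simp add: map_rr Fs_eval)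
            hence "det (rr (Fn a) i i) = det (map_mat (mp_eval a) (rr Fs i i))" by simp
            thus ?thesis by simp
          qed
          also have "det (rr Fs i i) = - mp_pderiv (Suc i) ?f"
            unfolding f_eq pderiv_uminus deriv[OF i] by simp
          also have "mp_eval a (- mp_pderiv (Suc i) ?f) = 0"
            using pd[of "Suc i"] i by (simp add: mp_eval_hom.hom_uminus)
          finally show ?thesis .
        qed
        obtain y where y: "y \<in> carrier_vec ?D" "y \<noteq> 0\<^sub>v ?D" "\<forall>j<N. y $ j = 0" "Fn a *\<^sub>v y = 0\<^sub>v ?D"
          using core[OF f0 fe g0] by blast
        obtain k where k: "k < ?D" "y $ k \<noteq> 0"
        proof (rule ccontr)
          assume "\<not> thesis"
          hence "\<forall>k<?D. y $ k = 0" using that by blast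
          hence "y = 0\<^sub>v ?D" using y(1) by (intro eq_vecI) auto
          thus False using y(2) by simp
        qed
        have "det (Fs :: 'k mpoly mat) = 0"
        proof (rule det_zero_const_kernel[OF Fs_carrier y(1) k])
          fix i j assume ij: "i < ?D" "j < ?D" "y $ j \<noteq> 0"
          hence "N \<le> j" using y(3) by (meson not_le)
          thus "Fs $$ (i,j) = mp_const (mp_eval a (Fs $$ (i,j)))" using Fs_const ij by blast
        next
          show "map_mat (mp_eval a) Fs *\<^sub>v y = 0\<^sub>v ?D" unfolding Fs_eval by (rule y(4))
        qed
        hence "?f = 0" unfolding f_eq by simp
        with nz show False by simp
      qed
    qed
    qed
  qed
  thus ?thesis unfolding open_hypersurface_smooth_def .
qed

end

theorem corollary4p2:
  fixes n N :: nat and src tgt :: "nat \<Rightarrow> nat" and v d :: nat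
  assumes "loopless_graph n N src tgt"
    and "v < n" and "d < n"
    and "{e \<in> {1..N}. src e = v \<or> tgt e = v} = {1, 2, 3}"
  shows "open_hypersurface_smooth {4..N}
           (dodgson n N src tgt d {1,3} {2,3} {} :: 'k::field mpoly)
           (dodgson n N src tgt d {1} {2} {3})"
proof -
  interpret gsetting n N src tgt v d by (rule gsetting.intro) (use assms in auto)
  show ?thesis by (rule main)
qed

end
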